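(* Let $S=\{(6,5),(0,1),(1,1),(3,3)\}$ with $c_{(3,3)}=2$ and $c_{(6,5)}=c_{(0,1)}=c_{(1,1)}=1$. Then for every $n\ge0$, $$\Delta_n=\frac{N_{S,C}(n,n)-1}{2^{n+1}}.$$ In particular $\Delta_n>0$ for all $n\ge3$.
   Context: A fair coin is flipped $n$ times, producing a sequence $x_1,\dots,x_n\in\{H,T\}$ of independent uniformly random outcomes. Alice's score is the number of indices $i\in\{1,\dots,n-1\}$ with $(x_i,x_{i+1})=(H,H)$; Bob's score is the number of indices $i\in\{1,\dots,n-1\}$ with $(x_i,x_{i+1})=(H,T)$. $\Delta_n$ is the probability that Bob's score strictly exceeds Alice's minus the probability that Alice's score strictly exceeds Bob's. Given finite $S\subset\mathbb Z_{\ge0}^2\setminus\{(0,0)\}$ and positive integers $C=\{c_s\}_{s\in S}$, a colored lattice path is a finite (possibly empty) sequence $((s_1,x_1),\dots,(s_m,x_m))$ with $s_i\in S$ and $x_i\in\{1,\dots,c_{s_i}\}$; its endpoint is $\sum_i s_i$. $N_{S,C}(a,b)$ denotes the number of colored lattice paths with endpoint $(a,b)$. *)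

theory Defs
  imports Complex_Main
begin

text \<open>Coin sequences: a list of booleans, True = H, False = T.
  Index i (0-based) ranges over positions with i+1 < length xs.\<close>

definition alice_score :: "bool list \<Rightarrow> nat" where
  "alice_score xs = card {i. Suc i < length xs \<and> xs ! i \<and> xs ! Suc i}"

definition bob_score :: "bool list \<Rightarrow> nat" where
  "bob_score xs = card {i. Suc i < length xs \<and> xs ! i \<and> \<not> xs ! Suc i}"

definition Delta :: "nat \<Rightarrow> real" where
  "Delta n =
     (real (card {xs :: bool list. length xs = n \<and> bob_score xs > alice_score xs})
      - real (card {xs :: bool list. length xs = n \<and> alice_score xs > bob_score xs})) / 2 ^ n"

definition colored_paths :: "(nat \<times> nat) set \<Rightarrow> (nat \<times> nat \<Rightarrow> nat) \<Rightarrow> ((nat \<times> nat) \<times> nat) list set" where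
  "colored_paths S c = {p. \<forall>(s, x) \<in> set p. s \<in> S \<and> 1 \<le> x \<and> x \<le> c s}"

definition path_endpoint :: "((nat \<times> nat) \<times> nat) list \<Rightarrow> nat \<times> nat" where
  "path_endpoint p = (sum_list (map (fst \<circ> fst) p), sum_list (map (snd \<circ> fst) p))"

definition N_SC :: "(nat \<times> nat) set \<Rightarrow> (nat \<times> nat \<Rightarrow> nat) \<Rightarrow> nat \<Rightarrow> nat \<Rightarrow> nat" where
  "N_SC S c a b = card {p \<in> colored_paths S c. path_endpoint p = (a, b)}"

end

theory Submission
  imports Defs "HOL-Computational_Algebra.Formal_Power_Series"
begin
unbundle fps_syntax


definition lastH :: "bool list \<Rightarrow> bool" where
  "lastH xs = (xs \<noteq> [] \<and> last xs)"

definition Dsc :: "bool list \<Rightarrow> int" where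
  "Dsc xs = int (bob_score xs) - int (alice_score xs)"

lemma alice_snoc:
  "alice_score (xs @ [b]) = alice_score xs + (if lastH xs \<and> b then 1 else 0)"
proof -
  have eq: "{i. Suc i < length (xs@[b]) \<and> (xs@[b]) ! i \<and> (xs@[b]) ! Suc i}
     = {i. Suc i < length xs \<and> xs ! i \<and> xs ! Suc i} \<union> (if lastH xs \<and> b then {length xs - 1} else {})"
    (is "?L = ?R \<union> ?E")
  proof (intro set_eqI iffI)
    fix i assume "i \<in> ?L"
    then show "i \<in> ?R \<union> ?E"
    proof (cases "Suc i < length xs")
      case False
      with \<open>i \<in> ?L\<close> have "i = length xs - 1" "xs \<noteq> []" by auto
      with \<open>i \<in> ?L\<close> show ?thesis by (auto simp: nth_append lastH_def last_conv_nth split: if_splits)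
    qed (use \<open>i \<in> ?L\<close> in \<open>auto simp: nth_append\<close>)
  next
    fix i assume "i \<in> ?R \<union> ?E"
    then show "i \<in> ?L"
      by (cases "xs = []") (auto simp: nth_append lastH_def last_conv_nth split: if_splits)
  qed
  have fin: "finite {i. Suc i < length xs \<and> xs ! i \<and> xs ! Suc i}" by (rule finite_subset[of _ "{..<length xs}"]) auto
  have dis: "?R \<inter> ?E = {}" by auto
  show ?thesis unfolding alice_score_def eq
    by (subst card_Un_disjoint[OF fin _ dis]) auto
qed

lemma bob_snoc:
  "bob_score (xs @ [b]) = bob_score xs + (if lastH xs \<and> \<not> b then 1 else 0)"
proof -
  have eq: "{i. Suc i < length (xs@[b]) \<and> (xs@[b]) ! i \<and> \<not> (xs@[b]) ! Suc i}
     = {i. Suc i < length xs \<and> xs ! i \<and> \<not> xs ! Suc i} \<union> (if lastH xs \<and> \<not> b then {length xs - 1} else {})"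
    (is "?L = ?R \<union> ?E")
  proof (intro set_eqI iffI)
    fix i assume "i \<in> ?L"
    then show "i \<in> ?R \<union> ?E"
    proof (cases "Suc i < length xs")
      case False
      with \<open>i \<in> ?L\<close> have "i = length xs - 1" "xs \<noteq> []" by auto
      with \<open>i \<in> ?L\<close> show ?thesis by (auto simp: nth_append lastH_def last_conv_nth split: if_splits)
    qed (use \<open>i \<in> ?L\<close> in \<open>auto simp: nth_append\<close>)
  next
    fix i assume "i \<in> ?R \<union> ?E"
    then show "i \<in> ?L"
      by (cases "xs = []") (auto simp: nth_append lastH_def last_conv_nth split: if_splits)
  qed
  have fin: "finite {i. Suc i < length xs \<and> xs ! i \<and> \<not> xs ! Suc i}" by (rule finite_subset[of _ "{..<length xs}"]) auto
  have dis: "?R \<inter> ?E = {}" by auto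
  show ?thesis unfolding bob_score_def eq
    by (subst card_Un_disjoint[OF fin _ dis]) auto
qed

lemma Dsc_snoc: "Dsc (xs @ [b]) = Dsc xs + (if lastH xs then (if b then -1 else 1) else 0)"
  unfolding Dsc_def alice_snoc bob_snoc by auto

lemma lastH_snoc[simp]: "lastH (xs @ [b]) = b"
  by (simp add: lastH_def)

lemma Dsc_Nil[simp]: "Dsc [] = 0" and lastH_Nil[simp]: "lastH [] = False"
  by (auto simp: Dsc_def alice_score_def bob_score_def lastH_def)

definition cnt :: "nat \<Rightarrow> (int \<Rightarrow> bool \<Rightarrow> bool) \<Rightarrow> nat" where
  "cnt n F = card {xs::bool list. length xs = n \<and> F (Dsc xs) (lastH xs)}"

lemma fin_len: "finite {xs::bool list. length xs = n \<and> P xs}"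
  by (rule finite_subset[OF _ finite_list_length[of n]]) auto

lemma cnt_Suc:
  "cnt (Suc n) F = cnt n (\<lambda>d l. F (d + (if l then -1 else 0)) True)
                 + cnt n (\<lambda>d l. F (d + (if l then 1 else 0)) False)"
proof -
  let ?P = "\<lambda>xs. F (Dsc xs) (lastH xs)"
  have eq: "{ys::bool list. length ys = Suc n \<and> ?P ys}
     = (\<lambda>xs. xs @ [True]) ` {xs. length xs = n \<and> ?P (xs @ [True])}
     \<union> (\<lambda>xs. xs @ [False]) ` {xs. length xs = n \<and> ?P (xs @ [False])}"
  proof (intro set_eqI iffI)
    fix ys assume "ys \<in> {ys::bool list. length ys = Suc n \<and> ?P ys}"
    then have l: "length ys = Suc n" and p: "?P ys" by auto
    then obtain xs b where ys: "ys = xs @ [b]"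
      by (metis append_butlast_last_id length_0_conv nat.distinct(1))
    show "ys \<in> (\<lambda>xs. xs @ [True]) ` {xs. length xs = n \<and> ?P (xs @ [True])}
     \<union> (\<lambda>xs. xs @ [False]) ` {xs. length xs = n \<and> ?P (xs @ [False])}"
      using l p ys by (cases b) auto
  qed auto
  have dis: "(\<lambda>xs. xs @ [True]) ` {xs. length xs = n \<and> ?P (xs @ [True])}
     \<inter> (\<lambda>xs. xs @ [False]) ` {xs. length xs = n \<and> ?P (xs @ [False])} = {}" by auto
  have inj: "inj (\<lambda>xs::bool list. xs @ [b])" for b by (auto simp: inj_def)
  show ?thesis unfolding cnt_def eq
    apply (subst card_Un_disjoint[OF _ _ dis])
      apply (auto intro!: finite_imageI fin_len)
    apply (simp only: card_image[OF inj_on_subset[OF inj subset_UNIV]])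
    apply (simp add: Dsc_snoc)
    done
qed

lemma cnt_disj: "(\<And>d l. \<not> (F d l \<and> G d l)) \<Longrightarrow> cnt n (\<lambda>d l. F d l \<or> G d l) = cnt n F + cnt n G"
  unfolding cnt_def
  by (subst card_Un_disjoint[symmetric]) (auto intro!: fin_len arg_cong[where f=card])

lemma cnt_False[simp]: "cnt n (\<lambda>d l. False) = 0"
  by (simp add: cnt_def)

lemma cnt_0: "cnt 0 F = (if F 0 False then 1 else 0)"
proof -
  have "{xs::bool list. length xs = 0 \<and> F (Dsc xs) (lastH xs)} = (if F 0 False then {[]} else {})" by auto
  then show ?thesis by (simp add: cnt_def)
qed

definition Hn where "Hn n k = cnt n (\<lambda>d l. l \<and> d = k)"
definition Tn where "Tn n k = cnt n (\<lambda>d l. \<not> l \<and> d = k)"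

lemma Hn_Suc: "Hn (Suc n) k = Hn n (k+1) + Tn n k"
proof -
  have "Hn (Suc n) k = cnt n (\<lambda>d l. (l \<and> d = k+1) \<or> (\<not> l \<and> d = k))"
    unfolding Hn_def cnt_Suc by (simp, rule arg_cong[where f="cnt n"], auto simp: fun_eq_iff)
  also have "\<dots> = Hn n (k+1) + Tn n k" unfolding Hn_def Tn_def by (rule cnt_disj) auto
  finally show ?thesis .
qed

lemma Tn_Suc: "Tn (Suc n) k = Hn n (k-1) + Tn n k"
proof -
  have "Tn (Suc n) k = cnt n (\<lambda>d l. (l \<and> d = k-1) \<or> (\<not> l \<and> d = k))"
    unfolding Tn_def cnt_Suc by (simp, rule arg_cong[where f="cnt n"], auto simp: fun_eq_iff)
  also have "\<dots> = Hn n (k-1) + Tn n k" unfolding Hn_def Tn_def by (rule cnt_disj) auto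
  finally show ?thesis .
qed

lemma Hn_0: "Hn 0 k = 0" and Tn_0: "Tn 0 k = (if k = 0 then 1 else 0)"
  by (auto simp: Hn_def Tn_def cnt_0)

definition pos where "pos n = cnt n (\<lambda>d l. d > 0)"
definition neg where "neg n = cnt n (\<lambda>d l. d < 0)"

lemma pos_Suc: "pos (Suc n) + Hn n 1 = 2 * pos n + Hn n 0"
proof -
  have a: "cnt n (\<lambda>d l. d + (if l then -1 else 0) > 0) + Hn n 1 = pos n"
  proof -
    have "pos n = cnt n (\<lambda>d l. d + (if l then -1 else 0) > 0 \<or> (l \<and> d = 1))"
      unfolding pos_def by (rule arg_cong[where f="cnt n"]) (auto simp: fun_eq_iff)
    also have "\<dots> = cnt n (\<lambda>d l. d + (if l then -1 else 0) > 0) + Hn n 1"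
      unfolding Hn_def by (rule cnt_disj) auto
    finally show ?thesis by simp
  qed
  have b: "cnt n (\<lambda>d l. d + (if l then 1 else 0) > 0) = pos n + Hn n 0"
  proof -
    have "cnt n (\<lambda>d l. d + (if l then 1 else 0) > 0) = cnt n (\<lambda>d l. d > 0 \<or> (l \<and> d = 0))"
      by (rule arg_cong[where f="cnt n"]) (auto simp: fun_eq_iff)
    also have "\<dots> = pos n + Hn n 0"
      unfolding Hn_def pos_def by (rule cnt_disj) auto
    finally show ?thesis .
  qed
  show ?thesis using a b unfolding pos_def[of "Suc n"] cnt_Suc by simp
qed

lemma neg_Suc: "neg (Suc n) + Hn n (-1) = 2 * neg n + Hn n 0"
proof -
  have a: "cnt n (\<lambda>d l. d + (if l then 1 else 0) < 0) + Hn n (-1) = neg n"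
  proof -
    have "neg n = cnt n (\<lambda>d l. d + (if l then 1 else 0) < 0 \<or> (l \<and> d = -1))"
      unfolding neg_def by (rule arg_cong[where f="cnt n"]) (auto simp: fun_eq_iff)
    also have "\<dots> = cnt n (\<lambda>d l. d + (if l then 1 else 0) < 0) + Hn n (-1)"
      unfolding Hn_def by (rule cnt_disj) auto
    finally show ?thesis by simp
  qed
  have b: "cnt n (\<lambda>d l. d + (if l then -1 else 0) < 0) = neg n + Hn n 0"
  proof -
    have "cnt n (\<lambda>d l. d + (if l then -1 else 0) < 0) = cnt n (\<lambda>d l. d < 0 \<or> (l \<and> d = 0))"
      by (rule arg_cong[where f="cnt n"]) (auto simp: fun_eq_iff)
    also have "\<dots> = neg n + Hn n 0"
      unfolding Hn_def neg_def by (rule cnt_disj) auto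
    finally show ?thesis .
  qed
  show ?thesis using a b unfolding neg_def[of "Suc n"] cnt_Suc by simp
qed

lemma pos_0: "pos 0 = 0" and neg_0: "neg 0 = 0" by (auto simp: pos_def neg_def cnt_0)

lemma Delta_eq: "Delta n = (real (pos n) - real (neg n)) / 2 ^ n"
proof -
  have "{xs::bool list. length xs = n \<and> bob_score xs > alice_score xs} = {xs. length xs = n \<and> Dsc xs > 0}"
       "{xs::bool list. length xs = n \<and> alice_score xs > bob_score xs} = {xs. length xs = n \<and> Dsc xs < 0}"
    by (auto simp: Dsc_def)
  then show ?thesis by (simp add: Delta_def pos_def neg_def cnt_def)
qed



definition S0 :: "(nat \<times> nat) set" where "S0 = {(6,5), (0,1), (1,1), (3,3)}"
definition c0 :: "nat \<times> nat \<Rightarrow> nat" where "c0 = (\<lambda>s. if s = (3,3) then 2 else 1)"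
definition E0 :: "((nat \<times> nat) \<times> nat) set" where
  "E0 = {((6,5),1), ((0,1),1), ((1,1),1), ((3,3),1), ((3,3),2)}"

definition Ps :: "nat \<Rightarrow> nat \<Rightarrow> ((nat \<times> nat) \<times> nat) list set" where
  "Ps a b = {p \<in> colored_paths S0 c0. path_endpoint p = (a,b)}"

lemma ep_Nil[simp]: "path_endpoint [] = (0,0)"
  by (simp add: path_endpoint_def)
lemma ep_Cons[simp]: "path_endpoint (e#p) = (fst (fst e) + fst (path_endpoint p), snd (fst e) + snd (path_endpoint p))"
  by (simp add: path_endpoint_def)

lemma CP_Nil[simp]: "[] \<in> colored_paths S0 c0" by (simp add: colored_paths_def)
lemma memE0: "((s,x) \<in> E0) = (s \<in> S0 \<and> 1 \<le> x \<and> x \<le> c0 s)"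
proof
  assume "(s,x) \<in> E0" then show "s \<in> S0 \<and> 1 \<le> x \<and> x \<le> c0 s" unfolding E0_def S0_def c0_def by auto
next
  assume a: "s \<in> S0 \<and> 1 \<le> x \<and> x \<le> c0 s"
  then have "x = 1 \<or> (s = (3,3) \<and> x = 2)" unfolding c0_def by (auto split: if_splits)
  then show "(s,x) \<in> E0" using a unfolding E0_def S0_def by auto
qed

lemma CP_Cons[simp]: "(e # p \<in> colored_paths S0 c0) = (e \<in> E0 \<and> p \<in> colored_paths S0 c0)"
proof -
  obtain s x where e: "e = (s,x)" by (cases e)
  show ?thesis unfolding e colored_paths_def memE0 by auto
qed

lemma Ps_eq: "Ps a b = (if a = 0 \<and> b = 0 then {[]} else {}) \<union>
   (\<Union>e\<in>E0. if fst (fst e) \<le> a \<and> snd (fst e) \<le> b then Cons e ` Ps (a - fst (fst e)) (b - snd (fst e)) else {})"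
proof (intro set_eqI iffI)
  fix p assume p: "p \<in> Ps a b"
  show "p \<in> (if a = 0 \<and> b = 0 then {[]} else {}) \<union>
   (\<Union>e\<in>E0. if fst (fst e) \<le> a \<and> snd (fst e) \<le> b then Cons e ` Ps (a - fst (fst e)) (b - snd (fst e)) else {})"
  proof (cases p)
    case Nil then show ?thesis using p by (auto simp: Ps_def)
  next
    case (Cons e q)
    then have "e \<in> E0" "q \<in> Ps (a - fst (fst e)) (b - snd (fst e))" "fst (fst e) \<le> a" "snd (fst e) \<le> b"
      using p by (auto simp: Ps_def prod_eq_iff)
    then have "p \<in> (if fst (fst e) \<le> a \<and> snd (fst e) \<le> b then Cons e ` Ps (a - fst (fst e)) (b - snd (fst e)) else {})"
      using Cons by simp
    then show ?thesis using \<open>e \<in> E0\<close> by blast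
  qed
next
  fix p assume "p \<in> (if a = 0 \<and> b = 0 then {[]} else {}) \<union>
   (\<Union>e\<in>E0. if fst (fst e) \<le> a \<and> snd (fst e) \<le> b then Cons e ` Ps (a - fst (fst e)) (b - snd (fst e)) else {})"
  then show "p \<in> Ps a b"
    by (auto simp: Ps_def split: if_splits)
qed

lemma E0_pos: "e \<in> E0 \<Longrightarrow> fst (fst e) + snd (fst e) > 0"
  by (auto simp: E0_def)

lemma Ps_finite: "finite (Ps a b)"
proof (induction "a + b" arbitrary: a b rule: less_induct)
  case less
  have "finite (if fst (fst e) \<le> a \<and> snd (fst e) \<le> b then Cons e ` Ps (a - fst (fst e)) (b - snd (fst e)) else {})"
    if "e \<in> E0" for e
    using E0_pos[OF that] less by auto
  then have H: "\<forall>e\<in>E0. finite (if fst (fst e) \<le> a \<and> snd (fst e) \<le> b then Cons e ` Ps (a - fst (fst e)) (b - snd (fst e)) else {})" by blast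
  have fE: "finite E0" by (simp add: E0_def)
  show ?case
    apply (subst Ps_eq)
    apply (rule finite_UnI)
     apply simp
    apply (rule finite_UN_I[OF fE])
    using H by blast
qed

lemma Ps_card: "card (Ps a b) = (if a = 0 \<and> b = 0 then 1 else 0) +
   (\<Sum>e\<in>E0. if fst (fst e) \<le> a \<and> snd (fst e) \<le> b then card (Ps (a - fst (fst e)) (b - snd (fst e))) else 0)"
proof -
  let ?U = "(\<Union>e\<in>E0. if fst (fst e) \<le> a \<and> snd (fst e) \<le> b then Cons e ` Ps (a - fst (fst e)) (b - snd (fst e)) else {})"
  have fE: "finite E0" by (simp add: E0_def)
  have cU: "card ?U = (\<Sum>e\<in>E0. card (if fst (fst e) \<le> a \<and> snd (fst e) \<le> b then Cons e ` Ps (a - fst (fst e)) (b - snd (fst e)) else {}))"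
    by (rule card_UN_disjoint[OF fE]) (auto simp: Ps_finite)
  have "card (if fst (fst e) \<le> a \<and> snd (fst e) \<le> b then Cons e ` Ps (a - fst (fst e)) (b - snd (fst e)) else {})
     = (if fst (fst e) \<le> a \<and> snd (fst e) \<le> b then card (Ps (a - fst (fst e)) (b - snd (fst e))) else 0)" for e
    by (auto simp: card_image)
  then have cU': "card ?U = (\<Sum>e\<in>E0. if fst (fst e) \<le> a \<and> snd (fst e) \<le> b then card (Ps (a - fst (fst e)) (b - snd (fst e))) else 0)"
    using cU by simp
  have "card (Ps a b) = card ((if a = 0 \<and> b = 0 then {[]} else {}) \<union> ?U)" by (subst Ps_eq) simp
  also have "\<dots> = card (if a = 0 \<and> b = 0 then {[] :: ((nat \<times> nat) \<times> nat) list} else {}) + card ?U"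
  proof -
    have fU: "finite ?U" using Ps_finite[of a b] by (subst (asm) Ps_eq) simp
    have d: "(if a = 0 \<and> b = 0 then {[]} else {}) \<inter> ?U = {}" by auto
    show ?thesis by (rule card_Un_disjoint[OF _ fU d]) simp
  qed
  finally show ?thesis using cU' by simp
qed

lemma Ps_card_explicit: "card (Ps a b) = (if a = 0 \<and> b = 0 then 1 else 0)
   + (if 6 \<le> a \<and> 5 \<le> b then card (Ps (a-6) (b-5)) else 0)
   + (if 1 \<le> b then card (Ps a (b-1)) else 0)
   + (if 1 \<le> a \<and> 1 \<le> b then card (Ps (a-1) (b-1)) else 0)
   + (if 3 \<le> a \<and> 3 \<le> b then 2 * card (Ps (a-3) (b-3)) else 0)"
  by (subst Ps_card) (simp add: E0_def)

definition M :: "int \<Rightarrow> int \<Rightarrow> real" where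
  "M a b = (if a < 0 \<or> b < 0 then 0 else real (card (Ps (nat a) (nat b))))"

lemma M_rec: "M a b = (if a = 0 \<and> b = 0 then 1 else 0) + M (a-6) (b-5) + M a (b-1) + M (a-1) (b-1) + 2 * M (a-3) (b-3)"
proof (cases "a < 0 \<or> b < 0")
  case True then show ?thesis by (auto simp: M_def)
next
  case False
  then obtain n m where nm: "a = int n" "b = int m" by (metis nonneg_int_cases not_less)
  have sh: "M (int n - int k) (int m - int l) = (if k \<le> n \<and> l \<le> m then real (card (Ps (n-k) (m-l))) else 0)" for k l
    unfolding M_def by (auto simp: nat_diff_distrib)
  have e1: "M (int n - 6) (int m - 5) = (if 6 \<le> n \<and> 5 \<le> m then real (card (Ps (n-6) (m-5))) else 0)"
    using sh[of 6 5] by simp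
  have e2: "M (int n) (int m - 1) = (if 1 \<le> m then real (card (Ps n (m-1))) else 0)"
    using sh[of 0 1] by simp
  have e3: "M (int n - 1) (int m - 1) = (if 1 \<le> n \<and> 1 \<le> m then real (card (Ps (n-1) (m-1))) else 0)"
    using sh[of 1 1] by simp
  have e4: "M (int n - 3) (int m - 3) = (if 3 \<le> n \<and> 3 \<le> m then real (card (Ps (n-3) (m-3))) else 0)"
    using sh[of 3 3] by simp
  have e0: "M (int n) (int m) = real (card (Ps n m))" by (simp add: M_def)
  show ?thesis
    unfolding nm e0 e1 e2 e3 e4
    by (subst Ps_card_explicit) simp
qed




lemma M_neg: "a < 0 \<or> b < 0 \<Longrightarrow> M a b = 0" by (simp add: M_def)
lemma M_nonneg: "M a b \<ge> 0" by (simp add: M_def)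

definition Gf :: "int \<Rightarrow> real fps" where "Gf j = Abs_fps (\<lambda>n. M (int n) (int n + j))"

lemma shiftM: "(fps_X^k * Gf j) $ n = M (int n - int k) (int n - int k + j)"
  by (auto simp: fps_X_power_mult_nth Gf_def of_nat_diff M_def)

lemma shiftM1: "(fps_X * Gf j) $ n = M (int n - 1) (int n - 1 + j)"
  using shiftM[of 1 j n] by simp

lemma Gf_rec: "Gf j = (if j = 0 then 1 else 0) + fps_X * Gf j + fps_X^3 * Gf j + fps_X^3 * Gf j
   + fps_X^6 * Gf (j+1) + Gf (j-1)"
proof (rule fps_ext)
  fix n
  have r: "M (int n) (int n + j) = (if int n = 0 \<and> int n + j = 0 then 1 else 0) + M (int n - 6) (int n + j - 5)
     + M (int n) (int n + j - 1) + M (int n - 1) (int n + j - 1) + 2 * M (int n - 3) (int n + j - 3)"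
    by (rule M_rec)
  have d: "(if j = 0 then 1 else 0 :: real fps) $ n = (if int n = 0 \<and> int n + j = 0 then 1 else 0)" by auto
  show "Gf j $ n = ((if j = 0 then 1 else 0) + fps_X * Gf j + fps_X^3 * Gf j + fps_X^3 * Gf j
   + fps_X^6 * Gf (j+1) + Gf (j-1)) $ n"
    unfolding fps_add_nth shiftM shiftM1 d
    using r by (simp add: Gf_def algebra_simps)
qed

lemma M_swap: "a - b = e \<Longrightarrow> e \<ge> 0 \<Longrightarrow> M a b = M (a - 6*e) (b - 4*e)"
proof (induction "nat (a+b+12)" arbitrary: a b e rule: less_induct)
  case less
  show ?case
  proof (cases "a < 0 \<or> b < 0")
    case True
    then have "b - 4*e < 0" using less.prems by auto
    then show ?thesis using True by (simp add: M_neg)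
  next
    case False
    show ?thesis
    proof (cases "e = 0")
      case True then show ?thesis by simp
    next
      case e: False
      with less.prems have e1: "e \<ge> 1" by simp
      have i1: "M (a-6) (b-5) = M (a-6*e) (b-4*e-1)"
        using less.hyps[of "a-6" "b-5" "e-1"] less.prems False e1 by (simp add: algebra_simps)
      have i2: "M a (b-1) = M (a-6*e-6) (b-4*e-5)"
        using less.hyps[of "a" "b-1" "e+1"] less.prems False e1 by (simp add: algebra_simps)
      have i3: "M (a-1) (b-1) = M (a-6*e-1) (b-4*e-1)"
        using less.hyps[of "a-1" "b-1" "e"] less.prems False e1 by (simp add: algebra_simps)
      have i4: "M (a-3) (b-3) = M (a-6*e-3) (b-4*e-3)"
        using less.hyps[of "a-3" "b-3" "e"] less.prems False e1 by (simp add: algebra_simps)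
      have r1: "M a b = M (a-6) (b-5) + M a (b-1) + M (a-1) (b-1) + 2 * M (a-3) (b-3)"
        using M_rec[of a b] less.prems e by auto
      have r2: "M (a-6*e) (b-4*e) = M (a-6*e-6) (b-4*e-5) + M (a-6*e) (b-4*e-1) + M (a-6*e-1) (b-4*e-1) + 2 * M (a-6*e-3) (b-4*e-3)"
      proof -
        have "\<not> (a - 6*e = 0 \<and> b - 4*e = 0)" using less.prems e by auto
        then show ?thesis using M_rec[of "a-6*e" "b-4*e"] by (simp add: algebra_simps)
      qed
      show ?thesis using r1 r2 i1 i2 i3 i4 by simp
    qed
  qed
qed

lemma Gf_m1: "Gf (-1) = fps_X^6 * Gf 1"
proof (rule fps_ext)
  fix n
  have "M (int n) (int n - 1) = M (int n - 6) (int n - 5)"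
    using M_swap[of "int n" "int n - 1" 1] by simp
  then show "Gf (-1) $ n = (fps_X^6 * Gf 1) $ n"
    unfolding shiftM by (simp add: Gf_def algebra_simps)
qed

lemma G0_id: "Gf 0 - fps_X * Gf 0 - 2 * (fps_X^3 * Gf 0) - 2 * (fps_X^6 * Gf 1) = 1"
proof -
  have "Gf 0 = 1 + fps_X * Gf 0 + fps_X^3 * Gf 0 + fps_X^3 * Gf 0 + fps_X^6 * Gf 1 + Gf (-1)"
    using Gf_rec[of 0] by simp
  then show ?thesis unfolding Gf_m1 by (simp add: algebra_simps)
qed

lemma Gf_pos_rec: "Gf (int s + 1) = fps_X * Gf (int s + 1) + fps_X^3 * Gf (int s + 1) + fps_X^3 * Gf (int s + 1)
   + fps_X^6 * Gf (int s + 2) + Gf (int s)"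
  using Gf_rec[of "int s + 1"] by (simp add: algebra_simps)




fun V :: "nat \<Rightarrow> nat \<Rightarrow> real fps" where
  "V s 0 = Gf (int s)"
| "V s (Suc j) = fps_X * V s j + fps_X^4 * V (Suc s) j"

definition Kx :: "nat \<Rightarrow> nat \<Rightarrow> real fps" where
  "Kx s j = (1 - fps_X) * V s (Suc j) - fps_X * (1 - fps_X) * V s j - fps_X^2 * V s (Suc (Suc j))"

lemma Kx_Suc: "Kx s (Suc j) = fps_X * Kx s j + fps_X^4 * Kx (Suc s) j"
  unfolding Kx_def V.simps(2)[of s "Suc (Suc j)"] V.simps(2)[of s "Suc j"] V.simps(2)[of s j]
  by (simp add: algebra_simps)

lemma Kx_0: "Kx s 0 = 0"
proof -
  have r: "Gf (int s + 1) = fps_X * Gf (int s + 1) + fps_X^3 * Gf (int s + 1) + fps_X^3 * Gf (int s + 1)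
   + fps_X^6 * Gf (int s + 2) + Gf (int s)" by (rule Gf_pos_rec)
  have "Kx s 0 = fps_X^4 * (Gf (int s + 1) - (fps_X * Gf (int s + 1) + fps_X^3 * Gf (int s + 1) + fps_X^3 * Gf (int s + 1)
   + fps_X^6 * Gf (int s + 2) + Gf (int s)))"
    unfolding Kx_def by (simp add: algebra_simps numeral_eq_Suc)
  also have "\<dots> = 0" using r by simp
  finally show ?thesis .
qed

lemma Kx_zero: "Kx s j = 0"
  by (induction j arbitrary: s) (simp_all add: Kx_0 Kx_Suc)

definition q :: "real fps" where "q = Abs_fps (\<lambda>n. if n = 0 then 0 else 1)"

lemma q_id: "(1 - fps_X) * q = fps_X"
proof -
  have "(1 - fps_X) * q = q - fps_X * q" by (simp add: algebra_simps)
  also have "\<dots> = fps_X" by (rule fps_ext) (auto simp: q_def)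
  finally show ?thesis .
qed

lemma one_minus_X_nz: "(1 - fps_X :: real fps) \<noteq> 0"
proof
  assume "(1 - fps_X :: real fps) = 0"
  then have "(1 - fps_X :: real fps) $ 0 = 0" by simp
  then show False by (simp add: fps_X_def)
qed

lemma one_minus_2X_nz: "(1 - 2 * fps_X :: real fps) \<noteq> 0"
proof
  assume "(1 - 2 * fps_X :: real fps) = 0"
  then have "(1 - 2 * fps_X :: real fps) $ 0 = 0" by simp
  then show False by (simp add: fps_X_def fps_mult_nth)
qed

definition Cf :: "int \<Rightarrow> real fps" where
  "Cf k = (if k \<le> 0 then fps_X * V 0 (nat (-k)) else fps_X * q^(nat k) * V 0 (nat k))"

lemma Cf_ker: "(1 - fps_X) * Cf k = fps_X * (1 - fps_X) * Cf (k+1) + fps_X^2 * Cf (k-1) + (if k = 0 then fps_X else 0)"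
proof (cases "k \<le> -1")
  case True
  define j where "j = nat (-k-1)"
  have k: "k = - int j - 1" using True by (simp add: j_def)
  have c1: "Cf k = fps_X * V 0 (Suc j)" "Cf (k+1) = fps_X * V 0 j" "Cf (k-1) = fps_X * V 0 (Suc (Suc j))"
    unfolding Cf_def k by (auto simp: nat_add_distrib)
  have "(1 - fps_X) * Cf k - (fps_X * (1 - fps_X) * Cf (k+1) + fps_X^2 * Cf (k-1)) = fps_X * Kx 0 j"
    unfolding c1 Kx_def by (simp add: algebra_simps del: V.simps)
  then show ?thesis using k by (simp add: Kx_zero)
next
  case False
  show ?thesis
  proof (cases "k = 0")
    case True
    have c1: "Cf 0 = fps_X * Gf 0" "Cf 1 = fps_X * q * V 0 1" "Cf (-1) = fps_X * V 0 1"
      unfolding Cf_def by auto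
    have v1: "V 0 1 = fps_X * Gf 0 + fps_X^4 * Gf 1" by (simp add: numeral_eq_Suc)
    have "fps_X * (1 - fps_X) * Cf 1 = fps_X * fps_X * ((1 - fps_X) * q) * V 0 1" unfolding c1 by (simp add: algebra_simps)
    also have "\<dots> = fps_X ^ 3 * V 0 1" unfolding q_id by (simp add: algebra_simps numeral_eq_Suc)
    finally have a: "fps_X * (1 - fps_X) * Cf 1 = fps_X ^ 3 * V 0 1" .
    have "(1 - fps_X) * Cf 0 - fps_X * (1 - fps_X) * Cf 1 - fps_X^2 * Cf (-1) - fps_X
       = fps_X * (Gf 0 - fps_X * Gf 0 - 2 * (fps_X^3 * Gf 0) - 2 * (fps_X^6 * Gf 1) - 1)"
      unfolding a unfolding c1 v1 by (simp add: algebra_simps numeral_eq_Suc)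
    also have "\<dots> = 0" unfolding G0_id by simp
    finally show ?thesis using True by (simp add: algebra_simps)
  next
    case k0: False
    define j where "j = nat (k-1)"
    have k: "k = int j + 1" using False k0 by (simp add: j_def)
    have c1: "Cf k = fps_X * q^(Suc j) * V 0 (Suc j)" "Cf (k+1) = fps_X * q^(Suc (Suc j)) * V 0 (Suc (Suc j))"
      "Cf (k-1) = fps_X * q^j * V 0 j"
      unfolding Cf_def k by (auto simp: nat_add_distrib)
    have "(1 - fps_X) * ((1 - fps_X) * Cf k - (fps_X * (1 - fps_X) * Cf (k+1) + fps_X^2 * Cf (k-1)))
       = fps_X^2 * q^j * Kx 0 j"
    proof -
      have "(1 - fps_X) * ((1 - fps_X) * Cf k - (fps_X * (1 - fps_X) * Cf (k+1) + fps_X^2 * Cf (k-1)))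
        = fps_X * q^j * (((1 - fps_X) * q) * ((1 - fps_X) * V 0 (Suc j)) - fps_X * ((1 - fps_X) * q) * ((1 - fps_X) * q) * V 0 (Suc (Suc j))
           - fps_X^2 * (1 - fps_X) * V 0 j)"
        unfolding c1 by (simp add: algebra_simps del: V.simps)
      also have "\<dots> = fps_X^2 * q^j * Kx 0 j"
        unfolding q_id Kx_def by (simp add: algebra_simps numeral_eq_Suc del: V.simps)
      finally show ?thesis .
    qed
    then have "(1 - fps_X) * ((1 - fps_X) * Cf k - (fps_X * (1 - fps_X) * Cf (k+1) + fps_X^2 * Cf (k-1))) = 0"
      by (simp add: Kx_zero)
    then have "(1 - fps_X) * Cf k - (fps_X * (1 - fps_X) * Cf (k+1) + fps_X^2 * Cf (k-1)) = 0"
      using one_minus_X_nz by simp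
    then show ?thesis using k0 by simp
  qed
qed

lemma Cf_0: "Cf k $ 0 = 0"
  by (simp add: Cf_def mult.assoc)




lemma fps_numeral_mult_nth [simp]: "(numeral k * f :: real fps) $ n = numeral k * f $ n"
  by (simp add: numeral_fps_const)

definition Hf :: "int \<Rightarrow> real fps" where "Hf k = Abs_fps (\<lambda>n. real (Hn n k))"
definition Tf :: "int \<Rightarrow> real fps" where "Tf k = Abs_fps (\<lambda>n. real (Tn n k))"

lemma Hf_rec: "Hf k = fps_X * (Hf (k+1) + Tf k)"
  by (rule fps_ext) (auto simp: Hf_def Tf_def Hn_0 Hn_Suc gr0_conv_Suc)

lemma Tf_rec: "Tf k = fps_X * (Hf (k-1) + Tf k) + (if k = 0 then 1 else 0)"
  by (rule fps_ext) (auto simp: Hf_def Tf_def Tn_0 Tn_Suc gr0_conv_Suc)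

lemma Hf_ker: "(1 - fps_X) * Hf k = fps_X * (1 - fps_X) * Hf (k+1) + fps_X^2 * Hf (k-1) + (if k = 0 then fps_X else 0)"
proof -
  have t: "(1 - fps_X) * Tf k = fps_X * Hf (k-1) + (if k = 0 then 1 else 0)"
    using Tf_rec[of k] by (simp add: algebra_simps)
  have "(1 - fps_X) * Hf k = fps_X * (1 - fps_X) * Hf (k+1) + fps_X * ((1 - fps_X) * Tf k)"
    by (subst Hf_rec) (simp add: algebra_simps)
  also have "\<dots> = fps_X * (1 - fps_X) * Hf (k+1) + fps_X^2 * Hf (k-1) + (if k = 0 then fps_X else 0)"
    unfolding t by (simp add: algebra_simps power2_eq_square)
  finally show ?thesis .
qed

lemma Hf_0: "Hf k $ 0 = 0" by (simp add: Hf_def Hn_0)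

lemma uniq:
  fixes Dl :: "int \<Rightarrow> real fps"
  assumes z: "\<And>k. Dl k $ 0 = 0"
    and r: "\<And>k. (1 - fps_X) * Dl k = fps_X * (1 - fps_X) * Dl (k+1) + fps_X^2 * Dl (k-1)"
  shows "Dl k = 0"
proof -
  have r': "Dl k = fps_X * (Dl k + Dl (k+1) - fps_X * Dl (k+1) + fps_X * Dl (k-1))" for k
    using r[of k] by (simp add: algebra_simps power2_eq_square)
  have "\<forall>k. \<forall>m\<le>n. Dl k $ m = 0" for n
  proof (induction n)
    case 0 then show ?case using z by simp
  next
    case (Suc n)
    show ?case
    proof (intro allI impI)
      fix k m assume m: "m \<le> Suc n"
      show "Dl k $ m = 0"
      proof (cases "m \<le> n")
        case True then show ?thesis using Suc by blast
      next
        case False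
        then have m': "m = Suc n" using m by simp
        have "Dl k $ m = (Dl k + Dl (k+1) - fps_X * Dl (k+1) + fps_X * Dl (k-1)) $ n"
          unfolding m' by (subst r') simp
        also have "\<dots> = 0" using Suc by auto
        finally show ?thesis .
      qed
    qed
  qed
  then show ?thesis by (intro fps_ext) auto
qed

lemma Hf_Cf: "Hf k = Cf k"
proof -
  have "(\<lambda>k. Hf k - Cf k) k = 0"
  proof (rule uniq)
    show "(Hf k - Cf k) $ 0 = 0" for k by (simp add: Hf_0 Cf_0)
    show "(1 - fps_X) * (Hf k - Cf k) = fps_X * (1 - fps_X) * (Hf (k+1) - Cf (k+1)) + fps_X^2 * (Hf (k-1) - Cf (k-1))" for k
    proof -
      have "(1 - fps_X) * Hf k - (1 - fps_X) * Cf k = (fps_X * (1 - fps_X) * Hf (k+1) + fps_X^2 * Hf (k-1) + (if k = 0 then fps_X else 0))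
         - (fps_X * (1 - fps_X) * Cf (k+1) + fps_X^2 * Cf (k-1) + (if k = 0 then fps_X else 0))"
        using Hf_ker[of k] Cf_ker[of k] by simp
      then show ?thesis by (simp add: algebra_simps)
    qed
  qed
  then show ?thesis by simp
qed

definition Df :: "real fps" where "Df = Abs_fps (\<lambda>n. real (pos n) - real (neg n))"

lemma Df_rec: "Df = fps_X * (Df + Df - Hf 1 + Hf (-1))"
proof (rule fps_ext)
  fix n
  show "Df $ n = (fps_X * (Df + Df - Hf 1 + Hf (-1))) $ n"
  proof (cases n)
    case 0 then show ?thesis by (simp add: Df_def pos_0 neg_0)
  next
    case (Suc m)
    have a: "real (pos (Suc m)) + real (Hn m 1) = 2 * real (pos m) + real (Hn m 0)"
      using pos_Suc[of m] by (metis of_nat_add of_nat_mult of_nat_numeral)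
    have b: "real (neg (Suc m)) + real (Hn m (-1)) = 2 * real (neg m) + real (Hn m 0)"
      using neg_Suc[of m] by (metis of_nat_add of_nat_mult of_nat_numeral)
    show ?thesis using a b unfolding Suc by (simp add: Df_def Hf_def)
  qed
qed

definition ones :: "real fps" where "ones = Abs_fps (\<lambda>n. 1)"

lemma ones_id: "(1 - fps_X) * ones = 1"
proof -
  have "(1 - fps_X) * ones = ones - fps_X * ones" by (simp add: algebra_simps)
  also have "\<dots> = 1" by (rule fps_ext) (auto simp: ones_def)
  finally show ?thesis .
qed

lemma main_fps: "Df + Df = Gf 0 - ones"
proof -
  have h1: "Hf 1 = fps_X * q * V 0 1" using Hf_Cf[of 1] by (simp add: Cf_def)
  have hm1: "Hf (-1) = fps_X * V 0 1" using Hf_Cf[of "-1"] by (simp add: Cf_def)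
  have v1: "V 0 1 = fps_X * Gf 0 + fps_X^4 * Gf 1" by (simp add: numeral_eq_Suc)
  have "(1 - 2 * fps_X) * ((1 - fps_X) * Df - fps_X^2 * V 0 1)
      = (1 - fps_X) * (Df - fps_X * (Df + Df - Hf 1 + Hf (-1))) - fps_X^2 * ((1 - fps_X) * q - fps_X) * V 0 1"
    unfolding h1 hm1 by (simp add: algebra_simps power2_eq_square del: V.simps)
  also have "\<dots> = 0" using Df_rec q_id by simp
  finally have "(1 - fps_X) * Df - fps_X^2 * V 0 1 = 0" using one_minus_2X_nz by simp
  then have d: "(1 - fps_X) * Df = fps_X^2 * V 0 1" by simp
  have "(1 - fps_X) * (Df + Df - Gf 0 + ones) = (1 - fps_X) * Df + (1 - fps_X) * Df - (1 - fps_X) * Gf 0 + (1 - fps_X) * ones"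
    by (simp add: algebra_simps del: V.simps)
  also have "\<dots> = fps_X^2 * V 0 1 + fps_X^2 * V 0 1 - (1 - fps_X) * Gf 0 + (1 - fps_X) * ones"
    by (simp only: d)
  also have "\<dots> = - (Gf 0 - fps_X * Gf 0 - 2 * (fps_X^3 * Gf 0) - 2 * (fps_X^6 * Gf 1)) + 1"
    unfolding v1 ones_id by (simp add: algebra_simps numeral_eq_Suc)
  also have "\<dots> = 0" unfolding G0_id by simp
  finally have "Df + Df - Gf 0 + ones = 0" using one_minus_X_nz by simp
  then show ?thesis by (simp add: algebra_simps)
qed

lemma main_coeff: "2 * (real (pos n) - real (neg n)) = M (int n) (int n) - 1"
proof -
  have "(Df + Df) $ n = (Gf 0 - ones) $ n" using main_fps by simp
  then show ?thesis by (simp add: Df_def Gf_def ones_def)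
qed

lemma M_diag_ge1: "M (int n) (int n) \<ge> 1"
proof (induction n)
  case 0 then show ?case using M_rec[of 0 0] M_nonneg[of "-6" "-5"] by (simp add: M_neg)
next
  case (Suc n)
  have "M (int (Suc n)) (int (Suc n)) \<ge> M (int n) (int n)"
    using M_rec[of "int (Suc n)" "int (Suc n)"] M_nonneg[of "int (Suc n) - 6" "int (Suc n) - 5"]
      M_nonneg[of "int (Suc n)" "int (Suc n) - 1"] M_nonneg[of "int (Suc n) - 3" "int (Suc n) - 3"]
    by simp
  then show ?case using Suc by simp
qed

lemma M_diag_ge2: "n \<ge> 3 \<Longrightarrow> M (int n) (int n) \<ge> 2"
proof -
  assume n: "n \<ge> 3"
  have "M (int n) (int n) \<ge> 2 * M (int n - 3) (int n - 3)"
    using M_rec[of "int n" "int n"] M_nonneg[of "int n - 6" "int n - 5"]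
      M_nonneg[of "int n" "int n - 1"] M_nonneg[of "int n - 1" "int n - 1"]
    by (simp split: if_splits)
  moreover have "M (int n - 3) (int n - 3) \<ge> 1" using M_diag_ge1[of "n-3"] n by (simp add: of_nat_diff)
  ultimately show ?thesis by simp
qed


theorem mainTheorem13:
  fixes S :: "(nat \<times> nat) set" and c :: "nat \<times> nat \<Rightarrow> nat"
  assumes "S = {(6,5), (0,1), (1,1), (3,3)}"
    and "c = (\<lambda>s. if s = (3,3) then 2 else 1)"
  shows "(\<forall>n. Delta n = (real (N_SC S c n n) - 1) / 2 ^ (n + 1))
         \<and> (\<forall>n\<ge>3. Delta n > 0)"
proof -
  have S: "S = S0" "c = c0" using assms by (simp_all add: S0_def c0_def)
  have N: "real (N_SC S c n n) = M (int n) (int n)" for n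
    by (simp add: S N_SC_def Ps_def M_def)
  have key: "real (pos n) - real (neg n) = (M (int n) (int n) - 1) / 2" for n
    using main_coeff[of n] by simp
  show ?thesis
  proof (intro conjI allI impI)
    fix n
    show "Delta n = (real (N_SC S c n n) - 1) / 2 ^ (n + 1)"
      unfolding Delta_eq N key by (simp add: field_simps)
  next
    fix n :: nat assume "n \<ge> 3"
    then have "M (int n) (int n) \<ge> 2" by (rule M_diag_ge2)
    then show "Delta n > 0" unfolding Delta_eq key by simp
  qed
qed

end
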